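(* Let $A\in\mathbb{R}^{n\times m}$ with $n<m$ have nonzero columns $\alpha_1,\dots,\alpha_m$, let $C=A^TA$ with entries $c_{ij}=\langle\alpha_i,\alpha_j\rangle$, and for each $i\in[m]$ define $\nu(i)=\max_{j\neq i}\frac{|c_{ij}|}{c_{ii}}$ and $\rho(i)=\frac{\nu(i)}{\nu(i)+1}$. Let $x\in\mathbb{R}^m$ have support $\mathcal{S}\subseteq[m]$ and put $\rho(\mathcal{S})=\sum_{i\in\mathcal{S}}\rho(i)$. If $\rho(\mathcal{S})<\frac12$, then $x$ is the unique minimizer of $\min_{z\in\mathbb{R}^m}\|z\|_1$ subject to $Az=Ax$ (i.e., every $\ell_1$ minimizer $\hat{x}$ of this problem equals $x$).
   Context: $[m]=\{1,\dots,m\}$. The support of $x$ is the set of indices $i$ with $x_i\neq 0$. The maximum in $\nu(i)$ is over $j\in[m]$, $j\neq i$. *)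

theory Defs
  imports "HOL-Analysis.Analysis"
begin

definition gram :: "real^'m^'n \<Rightarrow> 'm \<Rightarrow> 'm \<Rightarrow> real" where
  "gram A i j = column i A \<bullet> column j A"

definition nu :: "real^'m^'n \<Rightarrow> 'm \<Rightarrow> real" where
  "nu A i = Max {\<bar>gram A i j\<bar> / gram A i i | j. j \<noteq> i}"

definition rho :: "real^'m^'n \<Rightarrow> 'm \<Rightarrow> real" where
  "rho A i = nu A i / (nu A i + 1)"

definition supp :: "real^'m \<Rightarrow> 'm set" where
  "supp x = {i. x $ i \<noteq> 0}"

definition l1norm :: "real^'m \<Rightarrow> real" where
  "l1norm z = (\<Sum>i\<in>UNIV. \<bar>z $ i\<bar>)"

end

theory Submission
  imports Defs
begin

lemma gram_pos:
  fixes A :: "real^'m^'n"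
  assumes "column i A \<noteq> 0"
  shows "gram A i i > 0"
  using assms by (simp add: gram_def)

lemma nu_ge:
  fixes A :: "real^'m^'n"
  assumes "j \<noteq> i"
  shows "\<bar>gram A i j\<bar> / gram A i i \<le> nu A i"
proof -
  have "{\<bar>gram A i j\<bar> / gram A i i | j. j \<noteq> i} = (\<lambda>j. \<bar>gram A i j\<bar> / gram A i i) ` {j. j \<noteq> i}"
    by auto
  hence fin: "finite {\<bar>gram A i j\<bar> / gram A i i | j. j \<noteq> i}" by simp
  show ?thesis unfolding nu_def
    by (rule Max_ge[OF fin]) (use assms in blast)
qed

lemma gram_row_sum:
  fixes A :: "real^'m^'n"
  assumes "A *v h = 0"
  shows "(\<Sum>j\<in>UNIV. gram A i j * h $ j) = 0"
proof -
  have "(\<Sum>j\<in>UNIV. gram A i j * h $ j) = (\<Sum>j\<in>UNIV. \<Sum>k\<in>UNIV. A$k$i * A$k$j * h $ j)"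
    by (simp add: gram_def inner_vec_def column_def sum_distrib_right)
  also have "\<dots> = (\<Sum>k\<in>UNIV. A$k$i * (\<Sum>j\<in>UNIV. A$k$j * h $ j))"
    by (subst sum.swap) (simp add: sum_distrib_left mult.assoc)
  also have "\<dots> = (\<Sum>k\<in>UNIV. A$k$i * (A *v h)$k)"
    by (simp add: matrix_vector_mult_def)
  also have "\<dots> = 0" using assms by simp
  finally show ?thesis .
qed

lemma coord_bound:
  fixes A :: "real^'m^'n"
  assumes col: "\<And>j. column j A \<noteq> 0" and two: "\<exists>j::'m. j \<noteq> i"
    and h: "A *v h = 0"
  shows "\<bar>h $ i\<bar> \<le> rho A i * l1norm h"
proof -
  let ?g = "gram A i i"
  have gp: "?g > 0" using gram_pos col by blast
  obtain j0 where j0: "j0 \<noteq> i" using two by blast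
  have nu0: "nu A i \<ge> 0" using nu_ge[OF j0, of A] gp by (smt (verit) divide_nonneg_pos abs_ge_zero)
  have split: "(\<Sum>j\<in>UNIV. gram A i j * h $ j) = ?g * h$i + (\<Sum>j\<in>UNIV-{i}. gram A i j * h $ j)"
    by (simp add: sum.remove[of UNIV i])
  have eq: "?g * h$i = - (\<Sum>j\<in>UNIV-{i}. gram A i j * h $ j)"
    using gram_row_sum[OF h, of i] split by linarith
  have "?g * \<bar>h$i\<bar> = \<bar>\<Sum>j\<in>UNIV-{i}. gram A i j * h $ j\<bar>"
  proof -
    have "?g * \<bar>h$i\<bar> = \<bar>?g * h$i\<bar>" using gp by (simp add: abs_mult)
    also have "\<dots> = \<bar>\<Sum>j\<in>UNIV-{i}. gram A i j * h $ j\<bar>" by (simp only: eq abs_minus_cancel)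
    finally show ?thesis .
  qed
  also have "\<dots> \<le> (\<Sum>j\<in>UNIV-{i}. \<bar>gram A i j\<bar> * \<bar>h $ j\<bar>)"
    by (rule order_trans[OF sum_abs]) (simp add: abs_mult)
  also have "\<dots> \<le> (\<Sum>j\<in>UNIV-{i}. (nu A i * ?g) * \<bar>h $ j\<bar>)"
  proof (rule sum_mono)
    fix j assume "j \<in> UNIV - {i}"
    hence "\<bar>gram A i j\<bar> / ?g \<le> nu A i" using nu_ge by blast
    hence "\<bar>gram A i j\<bar> \<le> nu A i * ?g" using gp by (simp add: divide_le_eq)
    thus "\<bar>gram A i j\<bar> * \<bar>h $ j\<bar> \<le> (nu A i * ?g) * \<bar>h $ j\<bar>"
      by (simp add: mult_right_mono)
  qed
  also have "\<dots> = (nu A i * ?g) * (l1norm h - \<bar>h$i\<bar>)"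
    by (simp add: sum_distrib_left l1norm_def sum.remove[of UNIV i])
  finally have "?g * \<bar>h$i\<bar> \<le> ?g * (nu A i * (l1norm h - \<bar>h$i\<bar>))"
    by (simp add: algebra_simps)
  hence "\<bar>h$i\<bar> \<le> nu A i * (l1norm h - \<bar>h$i\<bar>)" using gp by simp
  hence "\<bar>h$i\<bar> * (nu A i + 1) \<le> nu A i * l1norm h" by (simp add: algebra_simps)
  thus ?thesis using nu0 unfolding rho_def by (simp add: le_divide_eq mult.commute)
qed

lemma card_two:
  assumes "CARD('n::finite) < CARD('m::finite)"
  shows "\<exists>j::'m. j \<noteq> i"
proof (rule ccontr)
  assume "\<not> ?thesis"
  hence "(UNIV::'m set) = {i}" by auto
  hence "CARD('m) = card {i}" by (rule arg_cong)
  hence "CARD('m) = 1" by simp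
  moreover have "CARD('n) \<ge> 1" by (simp add: Suc_leI)
  ultimately show False using assms by simp
qed

theorem theorem1:
  fixes A :: "real^'m^'n" and x :: "real^'m"
  assumes "CARD('n) < CARD('m)"
    and "\<And>j. column j A \<noteq> 0"
    and "(\<Sum>i\<in>supp x. rho A i) < 1/2"
  shows "(\<forall>z. A *v z = A *v x \<longrightarrow> l1norm x \<le> l1norm z)
    \<and> (\<forall>xh. (A *v xh = A *v x \<and> (\<forall>z. A *v z = A *v x \<longrightarrow> l1norm xh \<le> l1norm z))
            \<longrightarrow> xh = x)"
proof -
  let ?S = "supp x"
  have key: "l1norm x < l1norm z" if az: "A *v z = A *v x" and ne: "z \<noteq> x" for z
  proof -
    define h where "h = z - x"
    have h0: "A *v h = 0" using az by (simp add: h_def matrix_vector_mult_diff_distrib)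
    have hne: "h \<noteq> 0" using ne by (simp add: h_def)
    then obtain k where "h $ k \<noteq> 0" by (metis vec_eq_iff zero_index)
    hence Lpos: "l1norm h > 0" unfolding l1norm_def
      by (intro sum_pos2[of UNIV k]) auto
    have bnd: "(\<Sum>i\<in>?S. \<bar>h$i\<bar>) \<le> (\<Sum>i\<in>?S. rho A i) * l1norm h"
      unfolding sum_distrib_right
      by (rule sum_mono, rule coord_bound[OF assms(2) card_two[OF assms(1)] h0])
    also have "\<dots> < 1/2 * l1norm h" using assms(3) Lpos by simp
    finally have hS: "(\<Sum>i\<in>?S. \<bar>h$i\<bar>) < 1/2 * l1norm h" .
    have zs: "z $ i = x $ i + h $ i" for i by (simp add: h_def)
    have xz: "\<And>i. i \<notin> ?S \<Longrightarrow> x $ i = 0" by (simp add: supp_def)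
    have Lh: "l1norm h = (\<Sum>i\<in>?S. \<bar>h$i\<bar>) + (\<Sum>i\<in>UNIV-?S. \<bar>h$i\<bar>)"
      unfolding l1norm_def by (simp add: sum.subset_diff[of ?S UNIV])
    have Lx: "l1norm x = (\<Sum>i\<in>?S. \<bar>x$i\<bar>)"
      unfolding l1norm_def by (rule sum.mono_neutral_right) (auto simp: supp_def)
    have "l1norm z = (\<Sum>i\<in>?S. \<bar>z$i\<bar>) + (\<Sum>i\<in>UNIV-?S. \<bar>z$i\<bar>)"
      unfolding l1norm_def by (simp add: sum.subset_diff[of ?S UNIV])
    also have "(\<Sum>i\<in>UNIV-?S. \<bar>z$i\<bar>) = (\<Sum>i\<in>UNIV-?S. \<bar>h$i\<bar>)"
      by (rule sum.cong) (auto simp: zs xz)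
    also have "(\<Sum>i\<in>?S. \<bar>z$i\<bar>) \<ge> (\<Sum>i\<in>?S. \<bar>x$i\<bar> - \<bar>h$i\<bar>)"
      by (rule sum_mono) (simp add: zs abs_triangle_ineq4[of _ "- _", simplified] ;
          smt (verit) abs_triangle_ineq4)
    ultimately have "l1norm z \<ge> l1norm x - (\<Sum>i\<in>?S. \<bar>h$i\<bar>) + (\<Sum>i\<in>UNIV-?S. \<bar>h$i\<bar>)"
      using Lx by (simp add: sum_subtractf)
    thus ?thesis using Lh hS by linarith
  qed
  show ?thesis
  proof (intro conjI allI impI)
    fix z assume "A *v z = A *v x"
    thus "l1norm x \<le> l1norm z" using key by (cases "z = x") force+
  next
    fix xh assume a: "A *v xh = A *v x \<and> (\<forall>z. A *v z = A *v x \<longrightarrow> l1norm xh \<le> l1norm z)"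
    show "xh = x"
    proof (rule ccontr)
      assume "xh \<noteq> x"
      hence "l1norm x < l1norm xh" using key a by blast
      moreover have "l1norm xh \<le> l1norm x" using a by blast
      ultimately show False by simp
    qed
  qed
qed

end
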